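(* Assume $C\succ 0$. Let $X\succ 0$ be linearly feasible, i.e. $\mathcal{A}\,\mathrm{vec}(X)=b$, and suppose that $X$ is an equilibrium of the first-ansatz dynamics, i.e. $$v_1(X):=G\mathcal{A}^T(\mathcal{A}G\mathcal{A}^T)^\dagger\mathcal{A}\,\mathrm{vec}(X) - \mathrm{vec}(X) = 0,\qquad G=\tfrac12\bigl(C^{-1}\otimes X + X\otimes C^{-1}\bigr).$$ Then $X$ is an optimal solution of the SDP $\min\{\mathrm{tr}(CX): \mathrm{tr}(A_\ell X)=b_\ell\ \forall\ell\in[m],\ X\succeq 0\}$.
   Context: $C,A_1,\dots,A_m$ are symmetric $n\times n$ matrices and $b\in\mathbb{R}^m$. For an $n\times n$ matrix $M$, $\mathrm{vec}(M)\in\mathbb{R}^{n^2}$ is obtained by stacking the columns of $M$; $\otimes$ is the Kronecker product, with $\mathrm{vec}(ABC)=(C^T\otimes A)\mathrm{vec}(B)$ (so $G\,\mathrm{vec}(C)=\mathrm{vec}(X)$). $\mathcal{A}$ is the $m\times n^2$ matrix whose $\ell$-th row is $\mathrm{vec}(A_\ell)^T$. $\dagger$ is the Moore–Penrose pseudo-inverse. *)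

theory Defs
  imports "HOL-Analysis.Analysis"
begin

definition sym_mat :: "real^'n^'n \<Rightarrow> bool" where
  "sym_mat M \<longleftrightarrow> transpose M = M"

definition pos_def :: "real^'n^'n \<Rightarrow> bool" where
  "pos_def M \<longleftrightarrow> sym_mat M \<and> (\<forall>x. x \<noteq> 0 \<longrightarrow> x \<bullet> (M *v x) > 0)"

definition psd :: "real^'n^'n \<Rightarrow> bool" where
  "psd M \<longleftrightarrow> sym_mat M \<and> (\<forall>x. x \<bullet> (M *v x) \<ge> 0)"

text \<open>vec: R^{n x n} -> R^{n^2}; the coordinate (i,j) of vec M is M_ij (column stacking
  corresponds to ordering the index pairs (i,j) by j first, then i).\<close>
definition vecm :: "real^'n^'n \<Rightarrow> real^('n \<times> 'n)" where
  "vecm M = (\<chi> p. M $ fst p $ snd p)"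

text \<open>Kronecker product P \<otimes> Q, entry at ((i,j),(k,l)) is P_jl * Q_ik, so that
  (C^T \<otimes> A) vec(B) = vec(A B C).\<close>
definition kron :: "real^'n^'n \<Rightarrow> real^'n^'n \<Rightarrow> real^('n \<times> 'n)^('n \<times> 'n)" where
  "kron P Q = (\<chi> p q. P $ snd p $ snd q * Q $ fst p $ fst q)"

definition mp_pinv :: "real^'m^'m \<Rightarrow> real^'m^'m" where
  "mp_pinv M = (THE P. M ** P ** M = M \<and> P ** M ** P = P \<and>
      transpose (M ** P) = M ** P \<and> transpose (P ** M) = P ** M)"

definition constr_mat :: "('m::finite \<Rightarrow> real^'n^'n) \<Rightarrow> real^('n \<times> 'n)^'m" where
  "constr_mat A = (\<chi> l. vecm (A l))"

definition Gmat :: "real^'n^'n \<Rightarrow> real^'n^'n \<Rightarrow> real^('n \<times> 'n)^('n \<times> 'n)" where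
  "Gmat C X = (1/2) *\<^sub>R (kron (matrix_inv C) X + kron X (matrix_inv C))"

definition v1 :: "real^'n^'n \<Rightarrow> ('m::finite \<Rightarrow> real^'n^'n) \<Rightarrow> real^'n^'n \<Rightarrow> real^('n \<times> 'n)" where
  "v1 C A X = (let G = Gmat C X; AA = constr_mat A in
     (G ** transpose AA ** mp_pinv (AA ** G ** transpose AA) ** AA) *v vecm X - vecm X)"

definition sdp_feasible :: "('m::finite \<Rightarrow> real^'n^'n) \<Rightarrow> real^'m \<Rightarrow> real^'n^'n \<Rightarrow> bool" where
  "sdp_feasible A b Y \<longleftrightarrow> (\<forall>l. trace (A l ** Y) = b $ l) \<and> psd Y"

definition sdp_optimal :: "real^'n^'n \<Rightarrow> ('m::finite \<Rightarrow> real^'n^'n) \<Rightarrow> real^'m \<Rightarrow> real^'n^'n \<Rightarrow> bool" where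
  "sdp_optimal C A b X \<longleftrightarrow> sdp_feasible A b X \<and>
     (\<forall>Y. sdp_feasible A b Y \<longrightarrow> trace (C ** X) \<le> trace (C ** Y))"

end

theory Submission
  imports Defs
begin


lemma sym_dot: "sym_mat M \<Longrightarrow> x \<bullet> (M *v y) = (M *v x) \<bullet> y"
  by (metis dot_lmul_matrix sym_mat_def vector_transpose_matrix)

lemma pd_inj: assumes "pos_def M" "M *v x = 0" shows "x = 0"
  using assms unfolding pos_def_def by force

lemma pd_inv: assumes "pos_def M"
  shows "matrix_inv M ** M = mat 1" "M ** matrix_inv M = mat 1"
proof -
  have "invertible M"
    using pd_inj[OF assms] invertible_left_inverse matrix_left_invertible_ker by blast
  then have "M ** matrix_inv M = mat 1 \<and> matrix_inv M ** M = mat 1"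
    unfolding matrix_inv_def invertible_def by (rule someI_ex)
  then show "matrix_inv M ** M = mat 1" "M ** matrix_inv M = mat 1" by auto
qed

lemma quad_zero: assumes "sym_mat M" "\<forall>u. u \<bullet> (M *v u) = 0" shows "M = 0"
proof -
  have "\<And>u w. u \<bullet> (M *v w) = 0"
  proof -
    fix u w
    have "(u + w) \<bullet> (M *v (u + w)) = 0" using assms(2) by blast
    then have "u \<bullet> (M *v w) + w \<bullet> (M *v u) = 0"
      using assms(2) by (simp add: matrix_vector_right_distrib inner_add_left inner_add_right)
    moreover have "w \<bullet> (M *v u) = u \<bullet> (M *v w)"
      using sym_dot[OF assms(1)] by (simp add: inner_commute)
    ultimately show "u \<bullet> (M *v w) = 0" by simp
  qed
  then have "\<And>w. M *v w = 0" by (metis inner_eq_zero_iff)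
  then show ?thesis by (metis matrix_eq matrix_vector_mult_0)
qed

lemma quad_lemma: fixes a c :: real assumes "\<forall>t. 2*t*a + t^2*c \<le> 0" shows "a = 0"
proof -
  define k where "k = 1 + \<bar>c\<bar>"
  have p: "k > 0" "2*k + c > 0" unfolding k_def by (auto simp: abs_if)
  define t where "t = a / k"
  have "2*t*a + t^2*c \<le> 0" using assms by blast
  then have "(2*t*a + t^2*c) * k^2 \<le> 0" by (simp add: mult_nonpos_nonneg)
  moreover have "(2*t*a + t^2*c) * k^2 = a^2 * (2*k + c)"
    using p unfolding t_def by (simp add: field_simps power2_eq_square)
  ultimately have "a^2 \<le> 0" using p(2) by (metis mult_le_0_iff not_le power2_less_0)
  then show ?thesis by simp
qed


lemma mv_cont: "continuous_on S (\<lambda>u. (M::real^'n^'n) *v u)"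
  by (rule linear_continuous_on[OF matrix_vector_mul_bounded_linear])

lemma gen_eig: fixes B X :: "real^'n^'n"
  assumes "sym_mat B" "pos_def X"
  obtains v lam where "v \<noteq> 0" "B *v v = lam *\<^sub>R (X *v v)"
    "\<forall>u. u \<bullet> (B *v u) \<le> lam * (u \<bullet> (X *v u))"
proof -
  define f where "f u = (u \<bullet> (B *v u)) / (u \<bullet> (X *v u))" for u
  have Xpos: "u \<noteq> 0 \<Longrightarrow> u \<bullet> (X *v u) > 0" for u using assms(2) unfolding pos_def_def by blast
  have cont: "continuous_on (sphere 0 1) f"
    unfolding f_def
    apply (intro continuous_intros mv_cont)
    using Xpos by (metis less_irrefl norm_zero mem_sphere_0 zero_neq_one)
  have ne: "sphere (0::real^'n) 1 \<noteq> {}" by simp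
  obtain v where v: "v \<in> sphere 0 1" "\<forall>u\<in>sphere 0 1. f u \<le> f v"
    using continuous_attains_sup[OF compact_sphere ne cont] by blast
  define lam where "lam = f v"
  have v0: "v \<noteq> 0" using v(1) by auto
  have ineq: "u \<bullet> (B *v u) \<le> lam * (u \<bullet> (X *v u))" for u
  proof (cases "u = 0")
    case True then show ?thesis by simp
  next
    case False
    define w where "w = (1 / norm u) *\<^sub>R u"
    have "w \<in> sphere 0 1" using False unfolding w_def by simp
    then have "f w \<le> lam" using v(2) lam_def by blast
    moreover have "f w = f u"
      unfolding f_def w_def using False
      by (simp add: matrix_vector_mult_scaleR power2_eq_square)
    ultimately have "f u \<le> lam" by simp
    then show ?thesis using Xpos[OF False] unfolding f_def by (simp add: divide_le_eq)
  qed
  have veq: "v \<bullet> (B *v v) = lam * (v \<bullet> (X *v v))"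
    using Xpos[OF v0] unfolding lam_def f_def by simp
  define M where "M = B - lam *\<^sub>R X"
  have Mv: "M *v u = B *v u - lam *\<^sub>R (X *v u)" for u
    unfolding M_def by (simp add: matrix_vector_mult_diff_rdistrib scaleR_matrix_vector_assoc)
  have symM: "sym_mat M" using assms unfolding M_def sym_mat_def pos_def_def
    by (simp add: transpose_scalar transpose_def vec_eq_iff)
  have Qle: "u \<bullet> (M *v u) \<le> 0" for u using ineq[of u] by (simp add: Mv inner_diff_right)
  have Qv: "v \<bullet> (M *v v) = 0" using veq by (simp add: Mv inner_diff_right)
  define w where "w = M *v v"
  have "2*t*(w \<bullet> w) + t^2*(w \<bullet> (M *v w)) \<le> 0" for t
  proof -
    have "(v + t *\<^sub>R w) \<bullet> (M *v (v + t *\<^sub>R w)) \<le> 0" by (rule Qle)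
    moreover have "(v + t *\<^sub>R w) \<bullet> (M *v (v + t *\<^sub>R w))
       = v \<bullet> (M *v v) + t * (v \<bullet> (M *v w)) + t * (w \<bullet> (M *v v)) + t^2 * (w \<bullet> (M *v w))"
      by (simp add: matrix_vector_right_distrib matrix_vector_mult_scaleR inner_add_left inner_add_right power2_eq_square algebra_simps)
    moreover have "v \<bullet> (M *v w) = w \<bullet> w" using sym_dot[OF symM] unfolding w_def by simp
    moreover have "w \<bullet> (M *v v) = w \<bullet> w" unfolding w_def by simp
    ultimately show ?thesis using Qv by simp
  qed
  then have "w \<bullet> w = 0" using quad_lemma by blast
  then have "M *v v = 0" unfolding w_def by simp
  then have "B *v v = lam *\<^sub>R (X *v v)" by (simp add: Mv)
  then show ?thesis using that v0 ineq by blast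
qed


lemma sym_XDX: "sym_mat X \<Longrightarrow> sym_mat D \<Longrightarrow> sym_mat (X ** D ** X)"
  unfolding sym_mat_def by (simp add: matrix_transpose_mul matrix_mul_assoc)

lemma sylv_half: fixes C X D :: "real^'n^'n"
  assumes C: "pos_def C" and X: "pos_def X" and D: "sym_mat D"
    and eq: "C ** X ** D + D ** X ** C = 0"
  shows "u \<bullet> ((X ** D ** X) *v u) \<le> 0"
proof -
  have sX: "sym_mat X" using X unfolding pos_def_def by blast
  obtain v lam where v: "v \<noteq> 0" "(X ** D ** X) *v v = lam *\<^sub>R (X *v v)"
    "\<forall>u. u \<bullet> ((X ** D ** X) *v u) \<le> lam * (u \<bullet> (X *v u))"
    using gen_eig[OF sym_XDX[OF sX D] X] by blast
  define w where "w = X *v v"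
  have w0: "w \<noteq> 0" using pd_inj[OF X] v(1) unfolding w_def by blast
  have XDw: "X *v (D *v w) = lam *\<^sub>R w"
    using v(2) unfolding w_def by (simp add: matrix_vector_mul_assoc matrix_mul_assoc)
  have "(C ** X ** D + D ** X ** C) *v w = 0" using eq by simp
  then have "C *v (X *v (D *v w)) + D *v (X *v (C *v w)) = 0"
    by (simp add: matrix_vector_mult_add_rdistrib matrix_vector_mul_assoc matrix_mul_assoc)
  then have "lam *\<^sub>R (C *v w) + D *v (X *v (C *v w)) = 0"
    by (simp add: XDw matrix_vector_mult_scaleR)
  then have "w \<bullet> (lam *\<^sub>R (C *v w) + D *v (X *v (C *v w))) = 0" by simp
  then have e1: "lam * (w \<bullet> (C *v w)) + w \<bullet> (D *v (X *v (C *v w))) = 0"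
    by (simp add: inner_add_right)
  have "w \<bullet> (D *v (X *v (C *v w))) = (D *v w) \<bullet> (X *v (C *v w))" using sym_dot[OF D] by simp
  also have "\<dots> = (X *v (D *v w)) \<bullet> (C *v w)" using sym_dot[OF sX] by simp
  also have "\<dots> = lam * (w \<bullet> (C *v w))" by (simp add: XDw)
  finally have "2 * lam * (w \<bullet> (C *v w)) = 0" using e1 by simp
  moreover have "w \<bullet> (C *v w) > 0" using C w0 unfolding pos_def_def by blast
  ultimately have "lam = 0" by simp
  then show ?thesis using v(3) by simp
qed

lemma mat_neg_r: "(A::real^'n^'n) ** (- B) = - (A ** B)"
  by (simp add: matrix_matrix_mult_def vec_eq_iff sum_negf)
lemma mat_neg_l: "(- A::real^'n^'n) ** B = - (A ** B)"
  by (simp add: matrix_matrix_mult_def vec_eq_iff sum_negf)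

lemma sylv: fixes C X D :: "real^'n^'n"
  assumes C: "pos_def C" and X: "pos_def X" and D: "sym_mat D"
    and eq: "C ** X ** D + D ** X ** C = 0"
  shows "D = 0"
proof -
  have sX: "sym_mat X" using X unfolding pos_def_def by blast
  have D': "sym_mat (- D)" using D unfolding sym_mat_def by (simp add: transpose_def vec_eq_iff)
  have eq': "C ** X ** (- D) + (- D) ** X ** C = 0"
    using eq by (simp add: mat_neg_r mat_neg_l) (metis add.commute add_eq_0_iff)
  have "u \<bullet> ((X ** D ** X) *v u) = 0" for u
  proof -
    have "u \<bullet> ((X ** D ** X) *v u) \<le> 0" by (rule sylv_half[OF C X D eq])
    moreover have "u \<bullet> ((X ** (- D) ** X) *v u) \<le> 0" by (rule sylv_half[OF C X D' eq'])
    moreover have "X ** (- D) ** X = - (X ** D ** X)" by (simp add: mat_neg_r mat_neg_l)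
    moreover have "(- (X ** D ** X)) *v u = - ((X ** D ** X) *v u)"
      by (simp add: matrix_vector_mult_def vec_eq_iff sum_negf)
    ultimately show ?thesis by simp
  qed
  then have "X ** D ** X = 0" using quad_zero[OF sym_XDX[OF sX D]] by blast
  then have "matrix_inv X ** (X ** D ** X) ** matrix_inv X = 0" by simp
  then have "D ** X ** matrix_inv X = 0" using pd_inv[OF X] by (simp add: matrix_mul_assoc)
  then show ?thesis using pd_inv[OF X] by (metis matrix_mul_assoc matrix_mul_rid)
qed



lemma kron_vec: "kron P Q *v vecm M = vecm (Q ** M ** transpose P)"
proof -
  have "(kron P Q *v vecm M) $ p = vecm (Q ** M ** transpose P) $ p" for p
  proof -
    obtain i j where p: "p = (i, j)" by fastforce
    have "(kron P Q *v vecm M) $ p = (\<Sum>q\<in>UNIV \<times> UNIV. P $ j $ snd q * Q $ i $ fst q * M $ fst q $ snd q)"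
      by (simp add: p kron_def vecm_def matrix_vector_mult_def UNIV_Times_UNIV)
    also have "\<dots> = (\<Sum>k\<in>UNIV. \<Sum>l\<in>UNIV. P $ j $ l * Q $ i $ k * M $ k $ l)"
      by (simp add: sum.cartesian_product case_prod_beta)
    also have "\<dots> = (\<Sum>l\<in>UNIV. (\<Sum>k\<in>UNIV. Q $ i $ k * M $ k $ l) * P $ j $ l)"
      by (subst sum.swap) (simp add: sum_distrib_right sum_distrib_left mult_ac)
    also have "\<dots> = vecm (Q ** M ** transpose P) $ p"
      by (simp add: p vecm_def matrix_matrix_mult_def transpose_def)
    finally show ?thesis .
  qed
  then show ?thesis by (simp add: vec_eq_iff)
qed

lemma vecm_inj: "vecm M = vecm N \<Longrightarrow> M = N"
  unfolding vecm_def by (simp add: vec_eq_iff)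

lemma vecm_add: "vecm (M + N) = vecm M + vecm N" by (simp add: vecm_def vec_eq_iff)
lemma vecm_scale: "vecm (c *\<^sub>R M) = c *\<^sub>R vecm M" by (simp add: vecm_def vec_eq_iff)

lemma AT_vec: "transpose (constr_mat A) *v y = vecm (\<Sum>l\<in>UNIV. y $ l *\<^sub>R A l)"
  by (simp add: constr_mat_def vecm_def vec_eq_iff matrix_vector_mult_def transpose_def
      sum_component mult.commute)

lemma trace_lin: "trace ((\<Sum>l\<in>UNIV. y $ l *\<^sub>R A l) ** Y) = (\<Sum>l\<in>UNIV. y $ l * trace (A l ** Y))"
proof -
  have "trace ((\<Sum>l\<in>UNIV. y $ l *\<^sub>R A l) ** Y) =
     (\<Sum>i\<in>UNIV. \<Sum>k\<in>UNIV. \<Sum>n\<in>UNIV. y $ n * (A n $ i $ k * Y $ k $ i))"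
    by (simp add: trace_def matrix_matrix_mult_def sum_component sum_distrib_right mult.assoc)
  also have "\<dots> = (\<Sum>i\<in>UNIV. \<Sum>n\<in>UNIV. \<Sum>k\<in>UNIV. y $ n * (A n $ i $ k * Y $ k $ i))"
    by (rule sum.cong[OF refl], rule sum.swap)
  also have "\<dots> = (\<Sum>n\<in>UNIV. \<Sum>i\<in>UNIV. \<Sum>k\<in>UNIV. y $ n * (A n $ i $ k * Y $ k $ i))"
    by (rule sum.swap)
  also have "\<dots> = (\<Sum>l\<in>UNIV. y $ l * trace (A l ** Y))"
    by (simp add: trace_def matrix_matrix_mult_def sum_distrib_left)
  finally show ?thesis .
qed

lemma AX_trace: assumes "sym_mat X"
  shows "(constr_mat A *v vecm X) $ l = trace (A l ** X)"
proof -
  have XT: "X $ j $ i = X $ i $ j" for i j using assms unfolding sym_mat_def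
    by (metis transpose_def vec_lambda_beta)
  have "(constr_mat A *v vecm X) $ l = (\<Sum>q\<in>UNIV \<times> UNIV. A l $ fst q $ snd q * X $ fst q $ snd q)"
    by (simp add: constr_mat_def vecm_def matrix_vector_mult_def UNIV_Times_UNIV)
  also have "\<dots> = (\<Sum>i\<in>UNIV. \<Sum>j\<in>UNIV. A l $ i $ j * X $ j $ i)"
    apply (simp add: sum.cartesian_product case_prod_beta)
    apply (intro sum.cong refl)
    using XT by metis
  also have "\<dots> = trace (A l ** X)" by (simp add: trace_def matrix_matrix_mult_def)
  finally show ?thesis .
qed

lemma mm_diff_l: "(A::real^'n^'n) ** (B - C) = A ** B - A ** C"
  by (simp add: matrix_matrix_mult_def vec_eq_iff sum_subtractf ring_distribs)
lemma mm_diff_r: "((B::real^'n^'n) - C) ** A = B ** A - C ** A"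
  by (simp add: matrix_matrix_mult_def vec_eq_iff sum_subtractf ring_distribs)
lemma mm_add_r: "((B::real^'n^'n) + C) ** A = B ** A + C ** A"
  by (simp add: matrix_matrix_mult_def vec_eq_iff sum.distrib ring_distribs)



theorem lemma4p4:
  fixes C X :: "real^'n^'n" and A :: "'m::finite \<Rightarrow> real^'n^'n" and b :: "real^'m"
  assumes "sym_mat C" and "\<forall>l. sym_mat (A l)"
    and "pos_def C"
    and "pos_def X"
    and "constr_mat A *v vecm X = b"
    and "v1 C A X = 0"
  shows "sdp_optimal C A b X"
proof -
  note symC = assms(1) and symA = assms(2) and C = assms(3) and Xpd = assms(4)
  have symX: "sym_mat X" using Xpd unfolding pos_def_def by blast
  define G where "G = Gmat C X"
  define AA where "AA = constr_mat A"
  define y where "y = mp_pinv (AA ** G ** transpose AA) *v (AA *v vecm X)"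
  define S where "S = (\<Sum>l\<in>UNIV. y $ l *\<^sub>R A l)"
  define Ci where "Ci = matrix_inv C"
  have "(G ** transpose AA ** mp_pinv (AA ** G ** transpose AA) ** AA) *v vecm X = vecm X"
    using assms(6) unfolding v1_def G_def AA_def Let_def by simp
  then have "G *v (transpose AA *v y) = vecm X"
    unfolding y_def by (simp add: matrix_vector_mul_assoc matrix_mul_assoc)
  then have "G *v vecm S = vecm X" unfolding S_def AA_def by (metis AT_vec)
  moreover have "G *v vecm S = vecm ((1/2) *\<^sub>R (X ** S ** transpose Ci + Ci ** S ** X))"
    unfolding G_def Gmat_def Ci_def
    using symX
    by (simp add: scaleR_matrix_vector_assoc[symmetric] matrix_vector_mult_add_rdistrib kron_vec
        vecm_add vecm_scale sym_mat_def)
  ultimately have EX: "X = (1/2) *\<^sub>R (X ** S ** transpose Ci + Ci ** S ** X)"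
    using vecm_inj by metis
  have CiC: "Ci ** C = mat 1" "C ** Ci = mat 1" using pd_inv[OF C] unfolding Ci_def by auto
  have CiTC: "transpose Ci ** C = mat 1"
    using CiC symC unfolding sym_mat_def by (metis matrix_transpose_mul transpose_mat)
  have "C ** X ** C = C ** ((1/2) *\<^sub>R (X ** S ** transpose Ci + Ci ** S ** X)) ** C"
    using EX by simp
  also have "\<dots> = (1/2) *\<^sub>R (C ** X ** S ** (transpose Ci ** C) + (C ** Ci) ** S ** X ** C)"
    by (simp add: matrix_scalar_ac scalar_matrix_assoc[symmetric] matrix_add_ldistrib mm_add_r
        matrix_mul_assoc scaleR_add_right)
  also have "\<dots> = (1/2) *\<^sub>R (C ** X ** S + S ** X ** C)"
    by (simp add: CiC CiTC)
  finally have CXC: "C ** X ** C = (1/2) *\<^sub>R (C ** X ** S + S ** X ** C)" .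
  define D where "D = S - C"
  have symS: "sym_mat S"
    using symA unfolding S_def sym_mat_def by (simp add: transpose_def vec_eq_iff sum_component)
  have symD: "sym_mat D" using symS symC unfolding D_def sym_mat_def
    by (simp add: transpose_def vec_eq_iff)
  have "C ** X ** D + D ** X ** C = (C ** X ** S + S ** X ** C) - 2 *\<^sub>R (C ** X ** C)"
    unfolding D_def by (simp add: mm_diff_l mm_diff_r scaleR_2)
  also have "\<dots> = 0" using CXC by simp
  finally have "D = 0" using sylv[OF C Xpd symD] by blast
  then have SC: "S = C" unfolding D_def by simp
  have trX: "trace (A l ** X) = b $ l" for l using AX_trace[OF symX, of A l] assms(5) by simp
  have psdX: "psd X" using Xpd unfolding pos_def_def psd_def
    by (metis inner_zero_left order_le_less)
  have feasX: "sdp_feasible A b X" unfolding sdp_feasible_def using trX psdX by blast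
  have "trace (C ** X) = trace (C ** Y)" if "sdp_feasible A b Y" for Y
  proof -
    have tY: "trace (A l ** Y) = b $ l" for l using that unfolding sdp_feasible_def by blast
    show ?thesis unfolding SC[symmetric] S_def trace_lin using tY trX by simp
  qed
  then show ?thesis unfolding sdp_optimal_def using feasX by simp
qed

end
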